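(* The edge-coloring of a complete $k$-edge-colored permutation graph is a Gallai coloring with $k$ colors, i.e., it contains no rainbow triangle.
   Context: A complete $k$-edge-colored graph $G=(V,E_1,\dots,E_k)$ is the complete graph on a finite set $V$ with edges partitioned into $k$ nonempty color classes $E_i$; $G_{|i}=(V,E_i)$. A labeling is a bijection $\ell:V\to\{1,\dots,|V|\}$. A graph $(V,E)$ with labeling $\ell$ is a simple permutation graph of a permutation $\pi$ if for all $u,v$ with $\ell(u)>\ell(v)$: $\{u,v\}\in E$ iff $\pi^{-1}(\ell(u))<\pi^{-1}(\ell(v))$. $G$ is a complete $k$-edge-colored permutation graph if there exist a labeling $\ell$ and permutations $\pi_1,\dots,\pi_k$ with $(G_{|i},\ell)$ a simple permutation graph of $\pi_i$ for all $i$. A rainbow triangle is a set of three vertices whose three edges have pairwise distinct colors; a Gallai coloring of a complete graph with $k$ colors is an edge-coloring with $k$ colors containing no rainbow triangle. *)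

theory Defs
  imports "HOL-Combinatorics.Permutations"
begin

definition all_edges :: "'a set \<Rightarrow> 'a set set" where
  "all_edges V = {{u, v} | u v. u \<in> V \<and> v \<in> V \<and> u \<noteq> v}"

definition complete_k_edge_colored :: "'a set \<Rightarrow> nat \<Rightarrow> (nat \<Rightarrow> 'a set set) \<Rightarrow> bool" where
  "complete_k_edge_colored V k E \<longleftrightarrow>
     finite V \<and>
     (\<forall>i\<in>{1..k}. E i \<noteq> {} \<and> E i \<subseteq> all_edges V) \<and>
     (\<forall>i\<in>{1..k}. \<forall>j\<in>{1..k}. i \<noteq> j \<longrightarrow> E i \<inter> E j = {}) \<and>
     (\<Union>i\<in>{1..k}. E i) = all_edges V"

definition labeling :: "'a set \<Rightarrow> ('a \<Rightarrow> nat) \<Rightarrow> bool" where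
  "labeling V l \<longleftrightarrow> bij_betw l V {1..card V}"

definition simple_permutation_graph ::
  "'a set \<Rightarrow> 'a set set \<Rightarrow> ('a \<Rightarrow> nat) \<Rightarrow> (nat \<Rightarrow> nat) \<Rightarrow> bool" where
  "simple_permutation_graph V Ed l \<pi> \<longleftrightarrow>
     \<pi> permutes {1..card V} \<and>
     (\<forall>u\<in>V. \<forall>v\<in>V. l u > l v \<longrightarrow>
        ({u, v} \<in> Ed \<longleftrightarrow> inv \<pi> (l u) < inv \<pi> (l v)))"

definition complete_k_edge_colored_permutation_graph ::
  "'a set \<Rightarrow> nat \<Rightarrow> (nat \<Rightarrow> 'a set set) \<Rightarrow> bool" where
  "complete_k_edge_colored_permutation_graph V k E \<longleftrightarrow>
     complete_k_edge_colored V k E \<and>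
     (\<exists>l \<pi>. labeling V l \<and>
        (\<forall>i\<in>{1..k}. simple_permutation_graph V (E i) l (\<pi> i)))"

definition rainbow_triangle :: "'a set \<Rightarrow> nat \<Rightarrow> (nat \<Rightarrow> 'a set set) \<Rightarrow> 'a \<Rightarrow> 'a \<Rightarrow> 'a \<Rightarrow> bool" where
  "rainbow_triangle V k E x y z \<longleftrightarrow>
     x \<in> V \<and> y \<in> V \<and> z \<in> V \<and> x \<noteq> y \<and> y \<noteq> z \<and> x \<noteq> z \<and>
     (\<exists>i\<in>{1..k}. \<exists>j\<in>{1..k}. \<exists>m\<in>{1..k}. i \<noteq> j \<and> j \<noteq> m \<and> i \<noteq> m \<and>
        {x, y} \<in> E i \<and> {y, z} \<in> E j \<and> {x, z} \<in> E m)"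

definition gallai_coloring :: "'a set \<Rightarrow> nat \<Rightarrow> (nat \<Rightarrow> 'a set set) \<Rightarrow> bool" where
  "gallai_coloring V k E \<longleftrightarrow>
     complete_k_edge_colored V k E \<and> (\<nexists>x y z. rainbow_triangle V k E x y z)"

end

theory Submission
  imports Defs
begin

lemma key:
  assumes sp: "simple_permutation_graph V Em l \<pi>"
    and V: "a \<in> V" "b \<in> V" "c \<in> V"
    and o: "l a < l b" "l b < l c"
    and e: "{a, c} \<in> Em"
  shows "{a, b} \<in> Em \<or> {b, c} \<in> Em"
proof (rule ccontr)
  assume n: "\<not> ({a, b} \<in> Em \<or> {b, c} \<in> Em)"
  have H: "\<And>u v. u \<in> V \<Longrightarrow> v \<in> V \<Longrightarrow> l u > l v \<Longrightarrow>
        ({u, v} \<in> Em \<longleftrightarrow> inv \<pi> (l u) < inv \<pi> (l v))"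
    using sp unfolding simple_permutation_graph_def by blast
  have "{c, a} = {a, c}" "{b, a} = {a, b}" "{c, b} = {b, c}" by auto
  then have 1: "inv \<pi> (l c) < inv \<pi> (l a)" and 2: "\<not> inv \<pi> (l b) < inv \<pi> (l a)"
    and 3: "\<not> inv \<pi> (l c) < inv \<pi> (l b)"
    using H[of c a] H[of b a] H[of c b] V o e n by auto
  show False using 1 2 3 by linarith
qed

lemma no_rb:
  assumes disj: "\<forall>i\<in>{1..k}. \<forall>j\<in>{1..k}. i \<noteq> j \<longrightarrow> E i \<inter> E j = {}"
    and sp: "\<forall>i\<in>{1..k}. simple_permutation_graph V (E i) l (\<pi> i)"
    and V: "a \<in> V" "b \<in> V" "c \<in> V"
    and o: "l a < l b" "l b < l c"
    and p: "p \<in> {1..k}" "q \<in> {1..k}" "r \<in> {1..k}"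
    and d: "p \<noteq> r" "q \<noteq> r"
    and e: "{a, b} \<in> E p" "{b, c} \<in> E q" "{a, c} \<in> E r"
  shows False
proof -
  have "{a, b} \<in> E r \<or> {b, c} \<in> E r"
    using key[OF sp[rule_format, OF p(3)] V o e(3)] .
  then show False using disj p d e by blast
qed

theorem corollary6p1:
  fixes V :: "'a set" and k :: nat and E :: "nat \<Rightarrow> 'a set set"
  assumes "complete_k_edge_colored_permutation_graph V k E"
  shows "gallai_coloring V k E"
proof -
  have c: "complete_k_edge_colored V k E" using assms
    unfolding complete_k_edge_colored_permutation_graph_def by blast
  obtain l \<pi> where lab: "labeling V l"
    and sp: "\<forall>i\<in>{1..k}. simple_permutation_graph V (E i) l (\<pi> i)"
    using assms unfolding complete_k_edge_colored_permutation_graph_def by blast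
  have disj: "\<forall>i\<in>{1..k}. \<forall>j\<in>{1..k}. i \<noteq> j \<longrightarrow> E i \<inter> E j = {}"
    using c unfolding complete_k_edge_colored_def by blast
  have inj: "inj_on l V" using lab unfolding labeling_def bij_betw_def by blast
  have "\<not> rainbow_triangle V k E x y z" for x y z
  proof
    assume "rainbow_triangle V k E x y z"
    then obtain i j m where V: "x \<in> V" "y \<in> V" "z \<in> V" and ne: "x \<noteq> y" "y \<noteq> z" "x \<noteq> z"
      and ijm: "i \<in> {1..k}" "j \<in> {1..k}" "m \<in> {1..k}" "i \<noteq> j" "j \<noteq> m" "i \<noteq> m"
      and e: "{x, y} \<in> E i" "{y, z} \<in> E j" "{x, z} \<in> E m"
      unfolding rainbow_triangle_def by blast
    have L: "l x \<noteq> l y" "l y \<noteq> l z" "l x \<noteq> l z"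
      using inj V ne by (auto dest: inj_onD)
    have s: "{y, x} = {x, y}" "{z, y} = {y, z}" "{z, x} = {x, z}" by auto
    consider "l x < l y" "l y < l z" | "l x < l z" "l z < l y" | "l y < l x" "l x < l z"
      | "l y < l z" "l z < l x" | "l z < l x" "l x < l y" | "l z < l y" "l y < l x"
      using L by linarith
    then show False
    proof cases
      case 1 then show ?thesis using no_rb[OF disj sp, of x y z i j m] V ijm e s by auto
    next
      case 2 then show ?thesis using no_rb[OF disj sp, of x z y m j i] V ijm e s by auto
    next
      case 3 then show ?thesis using no_rb[OF disj sp, of y x z i m j] V ijm e s by auto
    next
      case 4 then show ?thesis using no_rb[OF disj sp, of y z x j m i] V ijm e s by auto
    next
      case 5 then show ?thesis using no_rb[OF disj sp, of z x y m i j] V ijm e s by auto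
    next
      case 6 then show ?thesis using no_rb[OF disj sp, of z y x j i m] V ijm e s by auto
    qed
  qed
  then show ?thesis using c unfolding gallai_coloring_def by blast
qed

end
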